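(* Assume (A3) and (A5). For each $\gamma<\gamma_0$ with $\gamma\ne1$ there is a nice constant $\kappa$ (depending on $\gamma$) such that $$\sup_{m\ge1}\sup_{\nu\in[0,1]}|\epsilon_{m,L}(\nu)|\le\frac{\kappa}{L^{\min(\gamma,1)}},$$ while if $\gamma=1<\gamma_0$, $\sup_{m\ge1}\sup_{\nu}|\epsilon_{m,L}(\nu)|\le\kappa\frac{\log L}{L}$.
   Context: For $m\ge1$, $\mathcal S_m$ is a spectral density on $[0,1]$ with covariances $r_m(k)=\int_0^1\mathcal S_m(\nu)e^{2i\pi\nu k}d\nu$. (A3): $\sup_m\max_\nu\mathcal S_m<\infty$, $\inf_m\min_\nu\mathcal S_m>0$. (A5): for some $\gamma_0>0$, $\sup_m\sum_n(1+|n|)^{\gamma_0}|r_m(n)|<\infty$. $\mathcal R_{m,L}$ is the $L\times L$ Toeplitz matrix with entries $r_m(k-k')$, $\mathbf a_L(\nu)=L^{-1/2}(1,e^{2i\pi\nu},\dots,e^{2i\pi(L-1)\nu})^T$, and $\epsilon_{m,L}(\nu)=\mathcal S_m(\nu)\mathbf a_L^H(\nu)\mathcal R_{m,L}^{-1}\mathbf a_L(\nu)-1$. A nice constant is independent of $L$ (and $m,\nu$). *)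

theory Defs
  imports "HOL-Analysis.Analysis" "Jordan_Normal_Form.Gauss_Jordan_Elimination"
begin

definition covar :: "(real \<Rightarrow> real) \<Rightarrow> int \<Rightarrow> complex" where
  "covar S k = integral {0..1} (\<lambda>\<nu>. complex_of_real (S \<nu>) * cis (2 * pi * \<nu> * real_of_int k))"

definition toeplitz_cov :: "(real \<Rightarrow> real) \<Rightarrow> nat \<Rightarrow> complex mat" where
  "toeplitz_cov S L = Matrix.mat L L (\<lambda>(k, k'). covar S (int k - int k'))"

definition steer :: "nat \<Rightarrow> real \<Rightarrow> complex vec" where
  "steer L \<nu> = Matrix.vec L (\<lambda>k. cis (2 * pi * \<nu> * real k) / complex_of_real (sqrt (real L)))"

definition eps :: "(real \<Rightarrow> real) \<Rightarrow> nat \<Rightarrow> real \<Rightarrow> complex" where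
  "eps S L \<nu> = complex_of_real (S \<nu>) *
      (scalar_prod (conjugate (steer L \<nu>)) (mult_mat_vec (the (mat_inverse (toeplitz_cov S L))) (steer L \<nu>))) - 1"

end

theory Submission
  imports Defs "Jordan_Normal_Form.Determinant"
begin

lemma cis_int_has_integral:
  fixes j :: int
  shows "((\<lambda>\<nu>. cis (2 * pi * \<nu> * real_of_int j)) has_integral (if j = 0 then 1 else 0)) {0..1}"
proof (cases "j = 0")
  case True
  then show ?thesis using has_integral_const_real[of "1::complex" 0 1] by simp
next
  case False
  define c where "c = 2 * pi * real_of_int j"
  have c0: "c \<noteq> 0" using False by (simp add: c_def)
  define F where "F = (\<lambda>\<nu>::real. cis (c * \<nu>) / (\<i> * complex_of_real c))"
  have d: "(F has_vector_derivative cis (2 * pi * x * real_of_int j)) (at x within {0..1})" for x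
  proof -
    have "((\<lambda>x. cis (c * x)) has_derivative (\<lambda>t. (t * c) *\<^sub>R (\<i> * cis (c * x)))) (at x within {0..1})"
      by (intro has_derivative_cis derivative_eq_intros) auto
    then have "((\<lambda>x. cis (c * x)) has_vector_derivative (c *\<^sub>R (\<i> * cis (c * x)))) (at x within {0..1})"
      by (simp add: has_vector_derivative_def)
    then have "(F has_vector_derivative (c *\<^sub>R (\<i> * cis (c * x))) / (\<i> * complex_of_real c)) (at x within {0..1})"
      unfolding F_def by (intro has_vector_derivative_divide) 
    moreover have "(c *\<^sub>R (\<i> * cis (c * x))) / (\<i> * complex_of_real c) = cis (2 * pi * x * real_of_int j)"
      using c0 by (simp add: c_def scaleR_conv_of_real field_simps)
    ultimately show ?thesis by simp
  qed
  have "((\<lambda>\<nu>. cis (2 * pi * \<nu> * real_of_int j)) has_integral (F 1 - F 0)) {0..1}"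
    by (rule fundamental_theorem_of_calculus) (auto intro: d)
  moreover have "F 1 = F 0"
  proof -
    have "cis (c * 1) = 1" unfolding c_def using cis_multiple_2pi[of "real_of_int j"] by simp
    then show ?thesis by (simp add: F_def)
  qed
  ultimately show ?thesis using False by simp
qed


inductive cpoly :: "(real \<Rightarrow> real) \<Rightarrow> bool" where
  cp_base: "cpoly (\<lambda>\<theta>. a * cos (real k * \<theta>))"
| cp_add: "cpoly P \<Longrightarrow> cpoly Q \<Longrightarrow> cpoly (\<lambda>\<theta>. P \<theta> + Q \<theta>)"

lemma cpoly_const: "cpoly (\<lambda>\<theta>. a)"
  using cp_base[of a 0] by simp

lemma cpoly_scale: "cpoly P \<Longrightarrow> cpoly (\<lambda>\<theta>. c * P \<theta>)"
proof (induction rule: cpoly.induct)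
  case (cp_base a k)
  then show ?case using cpoly.cp_base[of "c * a" k] by (simp add: mult.assoc)
next
  case (cp_add P Q)
  then show ?case using cpoly.cp_add[of "\<lambda>\<theta>. c * P \<theta>" "\<lambda>\<theta>. c * Q \<theta>"] by (simp add: distrib_left)
qed

lemma cpoly_mult_cos: "cpoly P \<Longrightarrow> cpoly (\<lambda>\<theta>. P \<theta> * cos \<theta>)"
proof (induction rule: cpoly.induct)
  case (cp_base a k)
  show ?case
  proof (cases k)
    case 0
    then show ?thesis using cpoly.cp_base[of a 1] by simp
  next
    case (Suc j)
    have eq: "a * cos (real k * \<theta>) * cos \<theta> = (a/2) * cos (real (Suc k) * \<theta>) + (a/2) * cos (real j * \<theta>)" for \<theta>
    proof -
      have "cos (real (Suc k) * \<theta>) = cos (real k * \<theta> + \<theta>)" by (simp add: algebra_simps)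
      moreover have "cos (real j * \<theta>) = cos (real k * \<theta> - \<theta>)" using Suc by (simp add: algebra_simps)
      ultimately show ?thesis by (simp add: cos_add cos_diff algebra_simps)
    qed
    show ?thesis unfolding eq by (intro cpoly.cp_add cpoly.cp_base)
  qed
next
  case (cp_add P Q)
  then show ?case using cpoly.cp_add[of "\<lambda>\<theta>. P \<theta> * cos \<theta>" "\<lambda>\<theta>. Q \<theta> * cos \<theta>"] by (simp add: distrib_right)
qed

lemma cpoly_sum: "finite A \<Longrightarrow> (\<And>i. i \<in> A \<Longrightarrow> cpoly (P i)) \<Longrightarrow> cpoly (\<lambda>\<theta>. \<Sum>i\<in>A. P i \<theta>)"
proof (induction rule: finite_induct)
  case empty
  then show ?case using cpoly_const[of 0] by simp
next
  case (insert x F)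
  then show ?case using cp_add[of "P x" "\<lambda>\<theta>. \<Sum>i\<in>F. P i \<theta>"] by simp
qed

lemma cpoly_mult_x: "cpoly P \<Longrightarrow> cpoly (\<lambda>\<theta>. P \<theta> * ((1 + cos \<theta>) / 2))"
proof -
  assume "cpoly P"
  then have "cpoly (\<lambda>\<theta>. (1/2) * P \<theta> + (1/2) * (P \<theta> * cos \<theta>))"
    by (intro cp_add cpoly_scale cpoly_mult_cos)
  then show ?thesis by (simp add: field_simps)
qed

lemma cpoly_mult_1x: "cpoly P \<Longrightarrow> cpoly (\<lambda>\<theta>. P \<theta> * (1 - (1 + cos \<theta>) / 2))"
proof -
  assume "cpoly P"
  then have "cpoly (\<lambda>\<theta>. (1/2) * P \<theta> + (-1/2) * (P \<theta> * cos \<theta>))"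
    by (intro cp_add cpoly_scale cpoly_mult_cos)
  then show ?thesis by (simp add: field_simps)
qed

lemma cpoly_pow: "cpoly (\<lambda>\<theta>. c * ((1 + cos \<theta>) / 2) ^ i * (1 - (1 + cos \<theta>) / 2) ^ j)"
proof (induction i)
  case 0
  show ?case
  proof (induction j)
    case 0
    then show ?case using cpoly_const[of c] by simp
  next
    case (Suc j)
    then show ?case using cpoly_mult_1x[OF Suc] by (simp add: algebra_simps)
  qed
next
  case (Suc i)
  then show ?case using cpoly_mult_x[OF Suc] by (simp add: algebra_simps)
qed

lemma cpoly_cont: "cpoly P \<Longrightarrow> continuous_on UNIV P"
  by (induction rule: cpoly.induct) (auto intro!: continuous_intros)


lemma cpoly_cont_comp: "cpoly P \<Longrightarrow> continuous_on S (\<lambda>t. P (2 * pi * t))"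
  using cpoly_cont continuous_on_compose2[of UNIV P S "\<lambda>t. 2 * pi * t"]
  by (auto intro!: continuous_intros)

lemma cpoly_int_zero:
  fixes h :: "real \<Rightarrow> real"
  assumes hc: "continuous_on {0..1} h"
    and hcos: "\<And>n::int. integral {0..1} (\<lambda>t. h t * cos (2 * pi * real_of_int n * t)) = 0"
    and hsin: "\<And>n::int. integral {0..1} (\<lambda>t. h t * sin (2 * pi * real_of_int n * t)) = 0"
  shows "cpoly P \<Longrightarrow> integral {0..1} (\<lambda>t. h t * P (2 * pi * t)) = 0 \<and>
                    integral {0..1} (\<lambda>t. h t * sin (2 * pi * t) * P (2 * pi * t)) = 0"
proof (induction rule: cpoly.induct)
  case (cp_base a k)
  have e1: "(\<lambda>t. h t * (a * cos (real k * (2 * pi * t)))) = (\<lambda>t. a * (h t * cos (2 * pi * real_of_int (int k) * t)))"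
    by (auto simp: algebra_simps)
  have "sin (2 * pi * t) * cos (real k * (2 * pi * t)) =
     (sin (2 * pi * real_of_int (1 + int k) * t) + sin (2 * pi * real_of_int (1 - int k) * t)) / 2" for t
  proof -
    have "sin (2 * pi * real_of_int (1 + int k) * t) = sin (2 * pi * t + real k * (2 * pi * t))"
      by (simp add: algebra_simps)
    moreover have "sin (2 * pi * real_of_int (1 - int k) * t) = sin (2 * pi * t - real k * (2 * pi * t))"
      by (simp add: algebra_simps)
    ultimately show ?thesis by (simp add: sin_add sin_diff)
  qed
  then have e2: "(\<lambda>t. h t * sin (2 * pi * t) * (a * cos (real k * (2 * pi * t)))) =
     (\<lambda>t. (a/2) * (h t * sin (2 * pi * real_of_int (1 + int k) * t)) + (a/2) * (h t * sin (2 * pi * real_of_int (1 - int k) * t)))"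
    by (auto simp: algebra_simps add_divide_distrib)
  have i1: "(\<lambda>t. h t * sin (2 * pi * real_of_int n * t)) integrable_on {0..1}" for n :: int
    by (intro integrable_continuous_interval continuous_intros hc)
  have z1: "integral {0..1} (\<lambda>t. h t * cos (2 * pi * real_of_int (int k) * t)) = 0" by (rule hcos)
  have z2: "integral {0..1} (\<lambda>t. (a/2) * (h t * sin (2 * pi * real_of_int (1 + int k) * t)) + (a/2) * (h t * sin (2 * pi * real_of_int (1 - int k) * t))) = 0"
  proof -
    have "integral {0..1} (\<lambda>t. (a/2) * (h t * sin (2 * pi * real_of_int (1 + int k) * t)) + (a/2) * (h t * sin (2 * pi * real_of_int (1 - int k) * t)))
      = integral {0..1} (\<lambda>t. (a/2) * (h t * sin (2 * pi * real_of_int (1 + int k) * t))) + integral {0..1} (\<lambda>t. (a/2) * (h t * sin (2 * pi * real_of_int (1 - int k) * t)))"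
      by (rule integral_add) (intro integrable_continuous_interval continuous_intros hc)+
    also have "\<dots> = (a/2) * integral {0..1} (\<lambda>t. h t * sin (2 * pi * real_of_int (1 + int k) * t)) + (a/2) * integral {0..1} (\<lambda>t. h t * sin (2 * pi * real_of_int (1 - int k) * t))"
      by (simp only: integral_mult[OF i1])
    also have "\<dots> = 0" using hsin[of "1 + int k"] hsin[of "1 - int k"] by simp
    finally show ?thesis .
  qed
  show ?case unfolding e1 e2 using z1 z2 by simp
next
  case (cp_add P Q)
  have c1: "continuous_on {0..1} (\<lambda>t. h t * P (2 * pi * t))" "continuous_on {0..1} (\<lambda>t. h t * Q (2 * pi * t))"
    "continuous_on {0..1} (\<lambda>t. h t * sin (2 * pi * t) * P (2 * pi * t))"
    "continuous_on {0..1} (\<lambda>t. h t * sin (2 * pi * t) * Q (2 * pi * t))"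
    using cpoly_cont_comp[OF cp_add.hyps(1)] cpoly_cont_comp[OF cp_add.hyps(2)]
    by (auto intro!: continuous_intros hc)
  have e: "(\<lambda>t. h t * (P (2 * pi * t) + Q (2 * pi * t))) = (\<lambda>t. h t * P (2 * pi * t) + h t * Q (2 * pi * t))"
    "(\<lambda>t. h t * sin (2 * pi * t) * (P (2 * pi * t) + Q (2 * pi * t))) =
     (\<lambda>t. h t * sin (2 * pi * t) * P (2 * pi * t) + h t * sin (2 * pi * t) * Q (2 * pi * t))"
    by (auto simp: algebra_simps)
  show ?case unfolding e
    using cp_add.IH c1 by (simp add: integral_add integrable_continuous_interval)
qed

lemma cpoly_approx:
  fixes g :: "real \<Rightarrow> real"
  assumes gc: "continuous_on {0..1} g" and gs: "\<And>t. t \<in> {0..1} \<Longrightarrow> g (1 - t) = g t"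
    and e: "e > 0"
  shows "\<exists>P. cpoly P \<and> (\<forall>t\<in>{0..1}. \<bar>g t - P (2 * pi * t)\<bar> < e)"
proof -
  define f where "f = (\<lambda>x. g (arccos (2 * x - 1) / (2 * pi)))"
  have fc: "continuous_on {0..1} f"
  proof -
    have "continuous_on {0..1} (\<lambda>x. arccos (2 * x - 1) / (2 * pi))"
      by (intro continuous_intros continuous_on_arccos') auto
    moreover have "(\<lambda>x. arccos (2 * x - 1) / (2 * pi)) ` {0..1} \<subseteq> {0..1}"
    proof
      fix y assume "y \<in> (\<lambda>x. arccos (2 * x - 1) / (2 * pi)) ` {0..1}"
      then obtain x where x: "x \<in> {0..1}" "y = arccos (2 * x - 1) / (2 * pi)" by auto
      have "0 \<le> arccos (2 * x - 1)" "arccos (2 * x - 1) \<le> pi"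
        using x by (auto intro!: arccos_lbound arccos_ubound)
      then show "y \<in> {0..1}" using x pi_gt_zero by (auto simp: x(2) divide_simps)
    qed
    ultimately show ?thesis unfolding f_def using continuous_on_compose2[OF gc] by blast
  qed
  obtain N where N: "\<And>n x. N \<le> n \<and> x \<in> {0..1} \<Longrightarrow> \<bar>f x - (\<Sum>k\<le>n. f (k/n) * Bernstein n k x)\<bar> < e"
    using Bernstein_Weierstrass[OF fc e] by blast
  define P where "P = (\<lambda>\<theta>. \<Sum>k\<le>N. f (k/N) * Bernstein N k ((1 + cos \<theta>) / 2))"
  have "cpoly P" unfolding P_def Bernstein_def
  proof (intro cpoly_sum)
    fix k
    show "cpoly (\<lambda>\<theta>. f (real k / real N) * (real (N choose k) * ((1 + cos \<theta>) / 2) ^ k * (1 - (1 + cos \<theta>) / 2) ^ (N - k)))"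
      using cpoly_pow[of "f (real k / real N) * real (N choose k)" k "N - k"] by (simp add: mult.assoc)
  qed simp
  moreover have "\<bar>g t - P (2 * pi * t)\<bar> < e" if t: "t \<in> {0..1}" for t
  proof -
    define x where "x = (1 + cos (2 * pi * t)) / 2"
    have x01: "x \<in> {0..1}" 
    proof -
      have "-1 \<le> cos (2 * pi * t)" "cos (2 * pi * t) \<le> 1" by simp_all
      then show ?thesis unfolding x_def atLeastAtMost_iff add_divide_distrib by (intro conjI; linarith)
    qed
    have x2: "2 * x - 1 = cos (2 * pi * t)" unfolding x_def by (simp add: field_simps)
    have "f x = g t"
    proof (cases "t \<le> 1/2")
      case True
      have "arccos (2 * x - 1) = 2 * pi * t" unfolding x2
        using True t by (intro arccos_cos) auto
      then show ?thesis unfolding f_def by simp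
    next
      case False
      have cc: "cos (2 * pi * t) = cos (2 * pi * (1 - t))"
      proof -
        have "cos (2 * pi * (1 - t)) = cos (2 * pi - 2 * pi * t)" by (simp add: algebra_simps)
        then show ?thesis by (simp add: cos_diff)
      qed
      have "arccos (2 * x - 1) = 2 * pi * (1 - t)" unfolding x2 cc
        using False t by (intro arccos_cos) auto
      then show ?thesis unfolding f_def using gs[OF t] by simp
    qed
    then show ?thesis using N[of N x] x01 unfolding P_def x_def by simp
  qed
  ultimately show ?thesis by blast
qed


lemma integral_reflect01:
  fixes F :: "real \<Rightarrow> 'a::euclidean_space"
  assumes "continuous_on {0..1} F"
  shows "integral {0..1} (\<lambda>t. F (1 - t)) = integral {0..1} F"
proof -
  have "(F has_integral integral {0..1} F) (cbox 0 1)"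
    using integrable_continuous_interval[OF assms] by (simp add: has_integral_integral)
  from has_integral_affinity[OF this, of "-1" 1]
  have "((\<lambda>x. F (1 - x)) has_integral integral {0..1} F) ((\<lambda>x. - x + 1) ` {0..1})"
    by simp
  moreover have "(\<lambda>x. - x + 1) ` {0..1::real} = {0..1}"
    using image_affinity_atLeastAtMost[of "-1" 1 0 1] by simp
  ultimately show ?thesis by (simp add: integral_unique)
qed

lemma integral_zero_approx:
  fixes \<psi> g :: "real \<Rightarrow> real"
  assumes \<psi>c: "continuous_on {0..1} \<psi>" and gc: "continuous_on {0..1} g"
    and gs: "\<And>t. t \<in> {0..1} \<Longrightarrow> g (1 - t) = g t"
    and z: "\<And>P. cpoly P \<Longrightarrow> integral {0..1} (\<lambda>t. \<psi> t * P (2 * pi * t)) = 0"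
  shows "integral {0..1} (\<lambda>t. \<psi> t * g t) = 0"
proof (rule ccontr)
  assume ne: "integral {0..1} (\<lambda>t. \<psi> t * g t) \<noteq> 0"
  obtain M where M: "M \<ge> 0" "\<And>x. x \<in> {0..1} \<Longrightarrow> norm (\<psi> x) \<le> M"
    using continuous_on_compact_bound[OF compact_Icc \<psi>c] by blast
  define I where "I = integral {0..1} (\<lambda>t. \<psi> t * g t)"
  define e where "e = \<bar>I\<bar> / (2 * (M + 1))"
  have e0: "e > 0" using ne M(1) unfolding e_def I_def by simp
  obtain P where P: "cpoly P" "\<And>t. t \<in> {0..1} \<Longrightarrow> \<bar>g t - P (2 * pi * t)\<bar> < e"
    using cpoly_approx[OF gc gs e0] by blast
  have Pc: "continuous_on {0..1} (\<lambda>t. P (2 * pi * t))" by (rule cpoly_cont_comp[OF P(1)])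
  have i1: "(\<lambda>t. \<psi> t * g t) integrable_on {0..1}"
    by (intro integrable_continuous_interval continuous_intros \<psi>c gc)
  have i2: "(\<lambda>t. \<psi> t * P (2 * pi * t)) integrable_on {0..1}"
    by (intro integrable_continuous_interval continuous_intros \<psi>c Pc)
  have fe: "(\<lambda>t. \<psi> t * (g t - P (2 * pi * t))) = (\<lambda>t. \<psi> t * g t - \<psi> t * P (2 * pi * t))"
    by (simp add: algebra_simps)
  have eqI: "I = integral {0..1} (\<lambda>t. \<psi> t * (g t - P (2 * pi * t)))"
    unfolding fe integral_diff[OF i1 i2] using z[OF P(1)] unfolding I_def by simp
  have i3: "(\<lambda>t. \<psi> t * (g t - P (2 * pi * t))) integrable_on {0..1}"
    unfolding fe by (rule integrable_diff[OF i1 i2])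
  have i4: "(\<lambda>t::real. M * e) integrable_on {0..1}" by (rule integrable_const_ivl)
  have bd: "norm (\<psi> x * (g x - P (2 * pi * x))) \<le> M * e" if x: "x \<in> {0..1}" for x
  proof -
    have "norm (\<psi> x * (g x - P (2 * pi * x))) = norm (\<psi> x) * \<bar>g x - P (2 * pi * x)\<bar>"
      by (simp add: abs_mult)
    also have "\<dots> \<le> M * e"
      using M(2)[OF x] P(2)[OF x] M(1) by (intro mult_mono) auto
    finally show ?thesis .
  qed
  have "norm I \<le> integral {0..1::real} (\<lambda>t. M * e)"
    unfolding eqI by (rule integral_norm_bound_integral[OF i3 i4 bd])
  then have "\<bar>I\<bar> \<le> M * e" using integral_const_real[of 0 1 "M * e"] by simp
  also have "M * e < \<bar>I\<bar>"
  proof -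
    have "M * e = \<bar>I\<bar> * (M / (2 * (M + 1)))" unfolding e_def using M(1) by (simp add: field_simps)
    also have "\<dots> < \<bar>I\<bar> * 1"
      using ne M(1) unfolding I_def by (intro mult_strict_left_mono) (auto simp: field_simps)
    finally show ?thesis by simp
  qed
  finally show False by simp
qed


lemma trig_unique:
  fixes h :: "real \<Rightarrow> real"
  assumes hc: "continuous_on {0..1} h"
    and hcos: "\<And>n::int. integral {0..1} (\<lambda>t. h t * cos (2 * pi * real_of_int n * t)) = 0"
    and hsin: "\<And>n::int. integral {0..1} (\<lambda>t. h t * sin (2 * pi * real_of_int n * t)) = 0"
    and t: "t \<in> {0..1}"
  shows "h t = 0"
proof -
  note Z = cpoly_int_zero[OF hc hcos hsin]
  have refl_c: "continuous_on {0..1} (\<lambda>t. F (1 - t))" if "continuous_on {0..1} F" for F :: "real \<Rightarrow> real"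
  proof -
    have "(\<lambda>t. 1 - t) ` {0..1::real} \<subseteq> {0..1}" by auto
    then show ?thesis by (intro continuous_on_compose2[OF that]) (auto intro!: continuous_intros)
  qed
  have hrc: "continuous_on {0..1} (\<lambda>t. h (1 - t))" by (rule refl_c[OF hc])
  define u where "u = (\<lambda>t. h t + h (1 - t))"
  define v where "v = (\<lambda>t. h t - h (1 - t))"
  define w where "w = (\<lambda>t. v t * sin (2 * pi * t))"
  have uc: "continuous_on {0..1} u" unfolding u_def by (intro continuous_intros hc hrc)
  have vc: "continuous_on {0..1} v" unfolding v_def by (intro continuous_intros hc hrc)
  have wc: "continuous_on {0..1} w" unfolding w_def by (intro continuous_intros vc)
  have us: "u (1 - t) = u t" for t unfolding u_def by simp
  have ws: "w (1 - t) = w t" for t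
  proof -
    have "sin (2 * pi * (1 - t)) = - sin (2 * pi * t)"
    proof -
      have "sin (2 * pi * (1 - t)) = sin (2 * pi - 2 * pi * t)" by (simp add: algebra_simps)
      then show ?thesis by (simp add: sin_diff)
    qed
    then show ?thesis unfolding w_def v_def by (simp add: algebra_simps)
  qed
  have I1: "integral {0..1} (\<lambda>t. h t * u t) = 0"
    by (rule integral_zero_approx[OF hc uc]) (use us Z in auto)
  have I1': "integral {0..1} (\<lambda>t. h (1 - t) * u t) = 0"
  proof -
    have "integral {0..1} (\<lambda>t. h (1 - t) * u t) = integral {0..1} (\<lambda>t. h (1 - t) * u (1 - (1 - t)))" by simp
    also have "\<dots> = integral {0..1} (\<lambda>t. h t * u (1 - t))"
      by (rule integral_reflect01[of "\<lambda>t. h t * u (1 - t)"]) (intro continuous_intros hc refl_c uc)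
    also have "\<dots> = 0" using I1 us by simp
    finally show ?thesis .
  qed
  have "integral {0..1} (\<lambda>t. u t * u t) = integral {0..1} (\<lambda>t. h t * u t + h (1 - t) * u t)"
    unfolding u_def by (simp add: algebra_simps)
  also have "\<dots> = 0"
    by (subst integral_add) (auto simp: I1 I1' intro!: integrable_continuous_interval continuous_intros hc hrc uc)
  finally have "integral {0..1} (\<lambda>t. u t * u t) = 0" .
  then have u0: "\<forall>x\<in>{0..1}. u x * u x = 0"
    by (subst integral_eq_0_iff[symmetric]) (auto intro!: continuous_intros uc)
  have I2: "integral {0..1} (\<lambda>t. (h t * sin (2 * pi * t)) * w t) = 0"
    by (rule integral_zero_approx) (use ws Z in \<open>auto intro!: continuous_intros hc wc\<close>)
  have I2': "integral {0..1} (\<lambda>t. (h (1 - t) * sin (2 * pi * t)) * w t) = 0"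
  proof -
    have s: "sin (2 * pi * (1 - t)) = - sin (2 * pi * t)" for t
    proof -
      have "sin (2 * pi * (1 - t)) = sin (2 * pi - 2 * pi * t)" by (simp add: algebra_simps)
      then show ?thesis by (simp add: sin_diff)
    qed
    have "integral {0..1} (\<lambda>t. (h (1 - t) * sin (2 * pi * t)) * w t) =
          integral {0..1} (\<lambda>t. - ((h (1 - t) * sin (2 * pi * (1 - t))) * w (1 - t)))"
      using s ws by simp
    also have "\<dots> = integral {0..1} (\<lambda>t. - ((h t * sin (2 * pi * t)) * w t))"
      by (rule integral_reflect01[of "\<lambda>t. - ((h t * sin (2 * pi * t)) * w t)"]) (intro continuous_intros hc wc)
    also have "\<dots> = 0" using I2 by simp
    finally show ?thesis .
  qed
  have "integral {0..1} (\<lambda>t. w t * w t) = integral {0..1} (\<lambda>t. (h t * sin (2 * pi * t)) * w t - (h (1 - t) * sin (2 * pi * t)) * w t)"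
    unfolding w_def v_def by (simp add: algebra_simps)
  also have "\<dots> = 0"
    by (subst integral_diff) (auto simp: I2 I2' intro!: integrable_continuous_interval continuous_intros hc hrc wc)
  finally have "integral {0..1} (\<lambda>t. w t * w t) = 0" .
  then have w0: "\<forall>x\<in>{0..1}. w x * w x = 0"
    by (subst integral_eq_0_iff[symmetric]) (auto intro!: continuous_intros wc)
  have hS: "h x = 0" if x: "x \<in> {0<..<1/2}" for x
  proof -
    have "sin (2 * pi * x) > 0" using x by (intro sin_gt_zero) auto
    moreover have "w x = 0" using w0 x by auto
    ultimately have "v x = 0" unfolding w_def by simp
    moreover have "u x = 0" using u0 x by auto
    ultimately show ?thesis unfolding u_def v_def by simp
  qed
  have hL: "h x = 0" if x: "x \<in> {0..1/2}" for x
  proof -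
    have cl: "closure {0<..<1/2::real} = {0..1/2}" by simp
    have "continuous_on (closure {0<..<1/2::real}) h" unfolding cl
      by (rule continuous_on_subset[OF hc]) auto
    then show ?thesis using continuous_constant_on_closure[of "{0<..<1/2}" h 0 x] hS x cl by auto
  qed
  show ?thesis
  proof (cases "t \<le> 1/2")
    case True then show ?thesis using hL t by auto
  next
    case False
    have "u t = 0" using u0 t by auto
    moreover have "h (1 - t) = 0" using hL False t by auto
    ultimately show ?thesis unfolding u_def by simp
  qed
qed

lemma coeffs_complex_to_real:
  fixes g :: "real \<Rightarrow> complex"
  assumes gc: "continuous_on {0..1} g"
    and z: "\<And>k::int. integral {0..1} (\<lambda>t. g t * cis (2 * pi * t * real_of_int k)) = 0"
  shows "integral {0..1} (\<lambda>t. Re (g t) * cos (2 * pi * real_of_int n * t)) = 0"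
    "integral {0..1} (\<lambda>t. Re (g t) * sin (2 * pi * real_of_int n * t)) = 0"
    "integral {0..1} (\<lambda>t. Im (g t) * cos (2 * pi * real_of_int n * t)) = 0"
    "integral {0..1} (\<lambda>t. Im (g t) * sin (2 * pi * real_of_int n * t)) = 0"
proof -
  define a where "a = integral {0..1} (\<lambda>t. Re (g t) * cos (2 * pi * real_of_int n * t))"
  define b where "b = integral {0..1} (\<lambda>t. Re (g t) * sin (2 * pi * real_of_int n * t))"
  define c where "c = integral {0..1} (\<lambda>t. Im (g t) * cos (2 * pi * real_of_int n * t))"
  define d where "d = integral {0..1} (\<lambda>t. Im (g t) * sin (2 * pi * real_of_int n * t))"
  have ic: "(\<lambda>t. g t * cis (2 * pi * t * real_of_int k)) integrable_on {0..1}" for k :: int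
    by (intro integrable_continuous_interval continuous_intros gc)
  have ia: "(\<lambda>t. Re (g t) * cos (2 * pi * real_of_int n * t)) integrable_on {0..1}"
    "(\<lambda>t. Re (g t) * sin (2 * pi * real_of_int n * t)) integrable_on {0..1}"
    "(\<lambda>t. Im (g t) * cos (2 * pi * real_of_int n * t)) integrable_on {0..1}"
    "(\<lambda>t. Im (g t) * sin (2 * pi * real_of_int n * t)) integrable_on {0..1}"
    by (intro integrable_continuous_interval continuous_intros gc)+
  have ReI: "Re (integral {0..1} (\<lambda>t. g t * cis (2 * pi * t * real_of_int k))) =
     integral {0..1} (\<lambda>t. Re (g t * cis (2 * pi * t * real_of_int k)))" for k :: int
    using integral_linear[OF ic bounded_linear_Re] by (simp add: o_def)
  have ImI: "Im (integral {0..1} (\<lambda>t. g t * cis (2 * pi * t * real_of_int k))) =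
     integral {0..1} (\<lambda>t. Im (g t * cis (2 * pi * t * real_of_int k)))" for k :: int
    using integral_linear[OF ic bounded_linear_Im] by (simp add: o_def)
  have e1: "(\<lambda>t. Re (g t * cis (2 * pi * t * real_of_int n))) =
     (\<lambda>t. Re (g t) * cos (2 * pi * real_of_int n * t) - Im (g t) * sin (2 * pi * real_of_int n * t))"
    by (auto simp: mult_ac)
  have e2: "(\<lambda>t. Re (g t * cis (2 * pi * t * real_of_int (- n)))) =
     (\<lambda>t. Re (g t) * cos (2 * pi * real_of_int n * t) + Im (g t) * sin (2 * pi * real_of_int n * t))"
    by (auto simp: mult_ac)
  have e3: "(\<lambda>t. Im (g t * cis (2 * pi * t * real_of_int n))) =
     (\<lambda>t. Re (g t) * sin (2 * pi * real_of_int n * t) + Im (g t) * cos (2 * pi * real_of_int n * t))"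
    by (auto simp: mult_ac)
  have e4: "(\<lambda>t. Im (g t * cis (2 * pi * t * real_of_int (- n)))) =
     (\<lambda>t. Im (g t) * cos (2 * pi * real_of_int n * t) - Re (g t) * sin (2 * pi * real_of_int n * t))"
    by (auto simp: mult_ac)
  have "a - d = 0" using ReI[of n] z[of n] unfolding e1 integral_diff[OF ia(1) ia(4)] a_def d_def by simp
  moreover have "a + d = 0" using ReI[of "-n"] z[of "-n"] unfolding e2 integral_add[OF ia(1) ia(4)] a_def d_def by simp
  moreover have "b + c = 0" using ImI[of n] z[of n] unfolding e3 integral_add[OF ia(2) ia(3)] b_def c_def by simp
  moreover have "c - b = 0" using ImI[of "-n"] z[of "-n"] unfolding e4 integral_diff[OF ia(3) ia(2)] b_def c_def by simp
  ultimately have "a = 0" "b = 0" "c = 0" "d = 0" by linarith+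
  then show "integral {0..1} (\<lambda>t. Re (g t) * cos (2 * pi * real_of_int n * t)) = 0"
    "integral {0..1} (\<lambda>t. Re (g t) * sin (2 * pi * real_of_int n * t)) = 0"
    "integral {0..1} (\<lambda>t. Im (g t) * cos (2 * pi * real_of_int n * t)) = 0"
    "integral {0..1} (\<lambda>t. Im (g t) * sin (2 * pi * real_of_int n * t)) = 0"
    unfolding a_def b_def c_def d_def by auto
qed

lemma weight_ge1: "x \<ge> 0 \<Longrightarrow> g \<ge> 0 \<Longrightarrow> (1 + x) powr g \<ge> (1::real)"
  by (rule ge_one_powr_ge_zero) auto

lemma tail_bound:
  fixes r :: "int \<Rightarrow> complex" and \<gamma>0 C x :: real and A :: "int set"
  assumes Ws: "(\<lambda>n. (1 + \<bar>real_of_int n\<bar>) powr \<gamma>0 * cmod (r n)) summable_on UNIV"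
    and WC: "(\<Sum>\<^sub>\<infinity>n. (1 + \<bar>real_of_int n\<bar>) powr \<gamma>0 * cmod (r n)) \<le> C"
    and g0: "\<gamma>0 \<ge> 0" and x0: "x \<ge> 0"
    and A: "\<And>n. n \<in> A \<Longrightarrow> x \<le> \<bar>real_of_int n\<bar>"
  shows "(\<lambda>n. cmod (r n)) summable_on A"
    "(\<Sum>\<^sub>\<infinity>n\<in>A. cmod (r n)) \<le> C / (1 + x) powr \<gamma>0"
proof -
  define W where "W = (\<lambda>n. (1 + \<bar>real_of_int n\<bar>) powr \<gamma>0 * cmod (r n))"
  have W0: "W n \<ge> 0" for n unfolding W_def by simp
  have "(\<lambda>n. norm (r n)) summable_on UNIV"
  proof (rule summable_on_comparison_test[of W])
    show "W summable_on UNIV" using Ws unfolding W_def by simp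
    fix n :: int
    have "1 * cmod (r n) \<le> W n" unfolding W_def
      using weight_ge1[of "\<bar>real_of_int n\<bar>" \<gamma>0] g0 by (intro mult_right_mono) auto
    then show "norm (r n) \<le> W n" by simp
  qed simp
  then show sA: "(\<lambda>n. cmod (r n)) summable_on A"
    using summable_on_subset_banach by fastforce
  have px: "(1 + x) powr \<gamma>0 > 0" using x0 by simp
  have "(\<Sum>\<^sub>\<infinity>n\<in>A. cmod (r n)) \<le> (\<Sum>\<^sub>\<infinity>n\<in>A. W n / (1 + x) powr \<gamma>0)"
  proof (rule infsum_mono[OF sA])
    have "W summable_on A" using summable_on_subset_banach[OF Ws, of A] unfolding W_def by simp
    from summable_on_cmult_left[OF this, of "1 / (1 + x) powr \<gamma>0"]
    show "(\<lambda>n. W n / (1 + x) powr \<gamma>0) summable_on A" by simp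
    fix n assume n: "n \<in> A"
    have "(1 + x) powr \<gamma>0 \<le> (1 + \<bar>real_of_int n\<bar>) powr \<gamma>0"
      using A[OF n] x0 by (intro powr_mono2) (auto simp: g0)
    then have "(1 + x) powr \<gamma>0 * cmod (r n) \<le> W n"
      unfolding W_def by (intro mult_right_mono) auto
    then show "cmod (r n) \<le> W n / (1 + x) powr \<gamma>0"
      using px by (simp add: field_simps)
  qed
  also have "\<dots> = (\<Sum>\<^sub>\<infinity>n\<in>A. W n) / (1 + x) powr \<gamma>0"
    using infsum_cmult_left[of "1 / (1 + x) powr \<gamma>0" W A] summable_on_subset_banach[OF Ws, of A]
    unfolding W_def by simp
  also have "\<dots> \<le> C / (1 + x) powr \<gamma>0"
  proof (intro divide_right_mono)
    have "(\<Sum>\<^sub>\<infinity>n\<in>A. W n) \<le> (\<Sum>\<^sub>\<infinity>n. W n)"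
      using summable_on_subset_banach[OF Ws] Ws W0 unfolding W_def
      by (intro infsum_mono_neutral) auto
    then show "(\<Sum>\<^sub>\<infinity>n\<in>A. W n) \<le> C" using WC unfolding W_def by simp
  qed (use px in auto)
  finally show "(\<Sum>\<^sub>\<infinity>n\<in>A. cmod (r n)) \<le> C / (1 + x) powr \<gamma>0" .
qed


lemma fourier_inversion:
  fixes S :: "real \<Rightarrow> real" and \<gamma>0 C :: real
  assumes Sc: "continuous_on {0..1} S"
    and Ws: "(\<lambda>n. (1 + \<bar>real_of_int n\<bar>) powr \<gamma>0 * cmod (covar S n)) summable_on UNIV"
    and WC: "(\<Sum>\<^sub>\<infinity>n. (1 + \<bar>real_of_int n\<bar>) powr \<gamma>0 * cmod (covar S n)) \<le> C"
    and g0: "\<gamma>0 > 0"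
    and \<nu>: "\<nu> \<in> {0..1}"
  shows "((\<lambda>n. covar S n * cis (- (2 * pi * \<nu> * real_of_int n))) has_sum complex_of_real (S \<nu>)) UNIV"
proof -
  define r where "r = covar S"
  define e where "e = (\<lambda>t n. r n * cis (- (2 * pi * t * real_of_int n)))"
  note tb = tail_bound[OF Ws[folded r_def] WC[folded r_def] less_imp_le[OF g0]]
  have ne: "norm (e t n) = cmod (r n)" for t n unfolding e_def by (simp add: norm_mult)
  have nsum: "(\<lambda>n. norm (e t n)) summable_on A" for t A unfolding ne using tb(1)[of 0 A] by simp
  have esum: "e t summable_on A" for t A
    using nsum by (rule abs_summable_summable)
  define T where "T = (\<lambda>t. \<Sum>\<^sub>\<infinity>n. e t n)"
  define A where "A = (\<lambda>N::nat. {- int N..int N})"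
  define PN where "PN = (\<lambda>N t. \<Sum>n\<in>A N. e t n)"
  define bnd where "bnd = (\<lambda>N::nat. C / (1 + real N) powr \<gamma>0)"
  have TP: "norm (T t - PN N t) \<le> bnd N" for N t
  proof -
    have "T t = (\<Sum>\<^sub>\<infinity>n\<in>A N \<union> (- A N). e t n)" unfolding T_def by simp
    also have "\<dots> = (\<Sum>\<^sub>\<infinity>n\<in>A N. e t n) + (\<Sum>\<^sub>\<infinity>n\<in>- A N. e t n)"
      by (rule infsum_Un_disjoint) (auto intro: esum)
    also have "(\<Sum>\<^sub>\<infinity>n\<in>A N. e t n) = PN N t" unfolding PN_def A_def by simp
    finally have "T t - PN N t = (\<Sum>\<^sub>\<infinity>n\<in>- A N. e t n)" by simp
    also have "norm \<dots> \<le> (\<Sum>\<^sub>\<infinity>n\<in>- A N. norm (e t n))"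
      by (rule norm_infsum_bound[OF nsum])
    also have "\<dots> = (\<Sum>\<^sub>\<infinity>n\<in>- A N. cmod (r n))" unfolding ne ..
    also have "\<dots> \<le> bnd N" unfolding bnd_def
      by (rule tb(2)) (auto simp: A_def)
    finally show ?thesis .
  qed
  have bnd0: "bnd \<longlonglongrightarrow> 0"
  proof -
    have "(\<lambda>N. (1 + real N) powr (- \<gamma>0)) \<longlonglongrightarrow> 0"
      by (intro tendsto_neg_powr filterlim_tendsto_add_at_top[OF tendsto_const filterlim_real_sequentially]) (use g0 in auto)
    then have "(\<lambda>N. C * (1 + real N) powr (- \<gamma>0)) \<longlonglongrightarrow> 0"
      by (rule tendsto_mult_right_zero)
    moreover have "C * (1 + real N) powr (- \<gamma>0) = bnd N" for N
      unfolding bnd_def by (simp add: powr_minus divide_inverse)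
    ultimately show ?thesis by simp
  qed
  have econt: "continuous_on UNIV (\<lambda>t. e t n)" for n unfolding e_def by (intro continuous_intros)
  have PNc: "continuous_on UNIV (PN N)" for N unfolding PN_def
    by (intro continuous_intros econt)
  have Tc: "continuous_on UNIV T"
  proof (rule uniform_limit_theorem)
    show "\<forall>\<^sub>F N in sequentially. continuous_on UNIV (PN N)" using PNc by simp
    show "uniform_limit UNIV PN T sequentially"
    proof (rule uniform_limitI)
      fix \<epsilon> :: real assume "\<epsilon> > 0"
      then have "\<forall>\<^sub>F N in sequentially. bnd N < \<epsilon>" using order_tendstoD(2)[OF bnd0] by simp
      then show "\<forall>\<^sub>F N in sequentially. \<forall>x\<in>UNIV. dist (PN N x) (T x) < \<epsilon>"
      proof (rule eventually_mono)
        fix N assume "bnd N < \<epsilon>"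
        then show "\<forall>x\<in>UNIV. dist (PN N x) (T x) < \<epsilon>"
          using TP by (auto simp: dist_norm norm_minus_commute intro: le_less_trans)
      qed
    qed
  qed simp
  have PNcoef: "((\<lambda>t. PN N t * cis (2 * pi * t * real_of_int k)) has_integral (if k \<in> A N then r k else 0)) {0..1}" for N k
  proof -
    have eq: "PN N t * cis (2 * pi * t * real_of_int k) = (\<Sum>n\<in>A N. r n * cis (2 * pi * t * real_of_int (k - n)))" for t
      unfolding PN_def e_def sum_distrib_right
    proof (rule sum.cong[OF refl])
      fix n
      have "cis (- (2 * pi * t * real_of_int n)) * cis (2 * pi * t * real_of_int k) = cis (2 * pi * t * real_of_int (k - n))"
        by (simp add: cis_mult algebra_simps)
      then show "r n * cis (- (2 * pi * t * real_of_int n)) * cis (2 * pi * t * real_of_int k) = r n * cis (2 * pi * t * real_of_int (k - n))"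
        by (simp add: mult.assoc)
    qed
    have "((\<lambda>t. \<Sum>n\<in>A N. r n * cis (2 * pi * t * real_of_int (k - n))) has_integral (\<Sum>n\<in>A N. r n * (if k - n = 0 then 1 else 0))) {0..1}"
      by (intro has_integral_sum has_integral_mult_right cis_int_has_integral) (simp add: A_def)
    moreover have "(\<Sum>n\<in>A N. r n * (if k - n = 0 then 1 else 0)) = (if k \<in> A N then r k else 0)"
      by (simp add: A_def if_distrib cong: if_cong)
    ultimately show ?thesis unfolding eq by simp
  qed
  have Tcoef: "integral {0..1} (\<lambda>t. T t * cis (2 * pi * t * real_of_int k)) = r k" for k
  proof -
    have iT: "(\<lambda>t. T t * cis (2 * pi * t * real_of_int k)) integrable_on {0..1}"
      by (intro integrable_continuous_interval continuous_intros continuous_on_subset[OF Tc]) auto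
    have le: "norm (integral {0..1} (\<lambda>t. T t * cis (2 * pi * t * real_of_int k)) - r k) \<le> bnd N"
      if N: "nat \<bar>k\<bar> \<le> N" for N
    proof -
      have kA: "k \<in> A N" using N unfolding A_def by auto
      have hP: "((\<lambda>t. PN N t * cis (2 * pi * t * real_of_int k)) has_integral r k) {0..1}"
        using PNcoef[of N k] kA by simp
      have "integral {0..1} (\<lambda>t. T t * cis (2 * pi * t * real_of_int k)) - r k =
            integral {0..1} (\<lambda>t. (T t - PN N t) * cis (2 * pi * t * real_of_int k))"
        using integral_diff[OF iT has_integral_integrable[OF hP]] integral_unique[OF hP]
        by (simp add: algebra_simps)
      also have "norm \<dots> \<le> integral {0..1::real} (\<lambda>t. bnd N)"
      proof (rule integral_norm_bound_integral)
        show "(\<lambda>t. (T t - PN N t) * cis (2 * pi * t * real_of_int k)) integrable_on {0..1}"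
          by (intro integrable_continuous_interval continuous_intros continuous_on_subset[OF Tc]
              continuous_on_subset[OF PNc]) auto
        show "(\<lambda>t::real. bnd N) integrable_on {0..1}" by (rule integrable_const_ivl)
        fix t :: real
        show "norm ((T t - PN N t) * cis (2 * pi * t * real_of_int k)) \<le> bnd N"
          using TP[of t N] by (simp add: norm_mult)
      qed
      also have "\<dots> = bnd N" by simp
      finally show ?thesis .
    qed
    show ?thesis
    proof (rule ccontr)
      assume "integral {0..1} (\<lambda>t. T t * cis (2 * pi * t * real_of_int k)) \<noteq> r k"
      then have pos: "norm (integral {0..1} (\<lambda>t. T t * cis (2 * pi * t * real_of_int k)) - r k) > 0" by simp
      obtain N0 where N0: "\<And>N. N \<ge> N0 \<Longrightarrow> bnd N < norm (integral {0..1} (\<lambda>t. T t * cis (2 * pi * t * real_of_int k)) - r k)"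
        using order_tendstoD(2)[OF bnd0 pos] unfolding eventually_sequentially by blast
      define N where "N = max N0 (nat \<bar>k\<bar>)"
      show False using N0[of N] le[of N] unfolding N_def by auto
    qed
  qed
  define g where "g = (\<lambda>t. complex_of_real (S t) - T t)"
  have gc: "continuous_on {0..1} g" unfolding g_def
    by (intro continuous_intros Sc continuous_on_subset[OF Tc]) auto
  have gz: "integral {0..1} (\<lambda>t. g t * cis (2 * pi * t * real_of_int k)) = 0" for k :: int
  proof -
    have i1: "(\<lambda>t. complex_of_real (S t) * cis (2 * pi * t * real_of_int k)) integrable_on {0..1}"
      by (intro integrable_continuous_interval continuous_intros Sc)
    have i2: "(\<lambda>t. T t * cis (2 * pi * t * real_of_int k)) integrable_on {0..1}"
      by (intro integrable_continuous_interval continuous_intros continuous_on_subset[OF Tc]) auto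
    have "(\<lambda>t. g t * cis (2 * pi * t * real_of_int k)) = (\<lambda>t. complex_of_real (S t) * cis (2 * pi * t * real_of_int k) - T t * cis (2 * pi * t * real_of_int k))"
      unfolding g_def by (simp add: algebra_simps)
    then show ?thesis using integral_diff[OF i1 i2] Tcoef[of k] unfolding r_def covar_def by simp
  qed
  note cz = coeffs_complex_to_real[OF gc gz]
  have "Re (g \<nu>) = 0"
    by (rule trig_unique[of "\<lambda>t. Re (g t)"]) (use cz \<nu> in \<open>auto intro!: continuous_intros gc\<close>)
  moreover have "Im (g \<nu>) = 0"
    by (rule trig_unique[of "\<lambda>t. Im (g t)"]) (use cz \<nu> in \<open>auto intro!: continuous_intros gc\<close>)
  ultimately have "g \<nu> = 0" by (simp add: complex_eq_iff)
  then have "T \<nu> = complex_of_real (S \<nu>)" unfolding g_def by simp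
  then show ?thesis using has_sum_infsum[OF esum[of \<nu> UNIV]] unfolding T_def e_def r_def by simp
qed

lemma inv_apply:
  fixes A B :: "nat \<Rightarrow> nat \<Rightarrow> complex"
  assumes AB: "\<And>i j. i < L \<Longrightarrow> j < L \<Longrightarrow> (\<Sum>k<L. A i k * B k j) = (if i = j then 1 else 0)"
    and i: "i < L"
  shows "(\<Sum>j<L. A i j * (\<Sum>k<L. B j k * v k)) = v i"
proof -
  have "(\<Sum>j<L. A i j * (\<Sum>k<L. B j k * v k)) = (\<Sum>j<L. \<Sum>k<L. A i j * B j k * v k)"
    by (simp add: sum_distrib_left mult.assoc)
  also have "\<dots> = (\<Sum>k<L. \<Sum>j<L. A i j * B j k * v k)" by (rule sum.swap)
  also have "\<dots> = (\<Sum>k<L. (\<Sum>j<L. A i j * B j k) * v k)" by (simp add: sum_distrib_right)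
  also have "\<dots> = (\<Sum>k<L. (if i = k then 1 else 0) * v k)" using AB i by simp
  also have "\<dots> = (\<Sum>k<L. if i = k then v k else 0)" by (rule sum.cong) auto
  also have "\<dots> = v i" using i by simp
  finally show ?thesis .
qed

lemma young_cmod: "b > 0 \<Longrightarrow> u * v \<le> (b / 2) * u\<^sup>2 + v\<^sup>2 / (2 * b)" for u v b :: real
proof -
  assume b: "b > 0"
  have "0 \<le> (b * u - v)\<^sup>2" by simp
  then have "2 * b * (u * v) \<le> b\<^sup>2 * u\<^sup>2 + v\<^sup>2" by (simp add: power2_eq_square algebra_simps)
  then show ?thesis using b by (simp add: field_simps power2_eq_square)
qed

lemma abstract_bound:
  fixes R G :: "nat \<Rightarrow> nat \<Rightarrow> complex" and a :: "nat \<Rightarrow> complex" and s b :: real and L :: nat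
  assumes RG: "\<And>i j. i < L \<Longrightarrow> j < L \<Longrightarrow> (\<Sum>k<L. R i k * G k j) = (if i = j then 1 else 0)"
    and GR: "\<And>i j. i < L \<Longrightarrow> j < L \<Longrightarrow> (\<Sum>k<L. G i k * R k j) = (if i = j then 1 else 0)"
    and herm: "\<And>i j. i < L \<Longrightarrow> j < L \<Longrightarrow> cnj (R i j) = R j i"
    and pos: "\<And>x. Re (\<Sum>i<L. cnj (x i) * (\<Sum>j<L. R i j * x j)) \<ge> b * (\<Sum>i<L. (cmod (x i))\<^sup>2)"
    and b0: "b > 0" and sb: "s \<ge> b"
    and an: "(\<Sum>i<L. (cmod (a i))\<^sup>2) = 1"
  shows "cmod (complex_of_real s * (\<Sum>i<L. cnj (a i) * (\<Sum>j<L. G i j * a j)) - 1) \<le>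
     ((\<Sum>i<L. cmod (complex_of_real s * a i - (\<Sum>j<L. R i j * a j)) * cmod (a i))
      + (\<Sum>i<L. (cmod (complex_of_real s * a i - (\<Sum>j<L. R i j * a j)))\<^sup>2) / b) / s"
proof -
  define \<delta> where "\<delta> = (\<lambda>i. complex_of_real s * a i - (\<Sum>j<L. R i j * a j))"
  define z where "z = (\<lambda>i. \<Sum>j<L. G i j * a j)"
  define y where "y = (\<lambda>i. \<Sum>j<L. G i j * \<delta> j)"
  define \<epsilon> where "\<epsilon> = complex_of_real s * (\<Sum>i<L. cnj (a i) * z i) - 1"
  have s0: "s > 0" using b0 sb by simp
  have F1: "(\<Sum>j<L. R i j * z j) = a i" if "i < L" for i
    unfolding z_def by (rule inv_apply[OF RG that])
  have F2: "(\<Sum>j<L. R i j * y j) = \<delta> i" if "i < L" for i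
    unfolding y_def by (rule inv_apply[OF RG that])
  have F3: "y i = complex_of_real s * z i - a i" if "i < L" for i
  proof -
    have "y i = (\<Sum>j<L. G i j * (complex_of_real s * a j)) - (\<Sum>j<L. G i j * (\<Sum>k<L. R j k * a k))"
      unfolding y_def \<delta>_def by (simp add: algebra_simps sum_subtractf)
    also have "(\<Sum>j<L. G i j * (\<Sum>k<L. R j k * a k)) = a i" by (rule inv_apply[OF GR that])
    also have "(\<Sum>j<L. G i j * (complex_of_real s * a j)) = complex_of_real s * z i"
      unfolding z_def by (simp add: sum_distrib_left algebra_simps)
    finally show ?thesis .
  qed
  have aa: "(\<Sum>i<L. cnj (a i) * a i) = 1"
  proof -
    have "(\<Sum>i<L. cnj (a i) * a i) = (\<Sum>i<L. complex_of_real ((cmod (a i))\<^sup>2))"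
      by (intro sum.cong refl) (metis complex_norm_square mult.commute)
    also have "\<dots> = complex_of_real (\<Sum>i<L. (cmod (a i))\<^sup>2)" by simp
    finally show ?thesis using an by simp
  qed
  have F4: "(\<Sum>i<L. cnj (\<delta> i) * z i) = \<epsilon>"
  proof -
    have "(\<Sum>i<L. cnj (\<delta> i) * z i) = (\<Sum>i<L. complex_of_real s * cnj (a i) * z i) - (\<Sum>i<L. (\<Sum>j<L. cnj (R i j) * cnj (a j)) * z i)"
      unfolding \<delta>_def by (simp add: algebra_simps sum_subtractf)
    also have "(\<Sum>i<L. (\<Sum>j<L. cnj (R i j) * cnj (a j)) * z i) = (\<Sum>i<L. \<Sum>j<L. cnj (a j) * (R j i * z i))"
      by (simp add: sum_distrib_right sum_distrib_left herm algebra_simps)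
    also have "\<dots> = (\<Sum>j<L. \<Sum>i<L. cnj (a j) * (R j i * z i))" by (rule sum.swap)
    also have "\<dots> = (\<Sum>j<L. cnj (a j) * a j)"
      by (intro sum.cong refl) (simp add: sum_distrib_left[symmetric] F1)
    also have "\<dots> = 1" by (rule aa)
    finally show ?thesis unfolding \<epsilon>_def by (simp add: sum_distrib_left algebra_simps)
  qed
  have F5: "complex_of_real s * \<epsilon> = (\<Sum>i<L. cnj (\<delta> i) * a i) + (\<Sum>i<L. cnj (\<delta> i) * y i)"
  proof -
    have "complex_of_real s * \<epsilon> = (\<Sum>i<L. cnj (\<delta> i) * (complex_of_real s * z i))"
      unfolding F4[symmetric] by (simp add: sum_distrib_left algebra_simps)
    also have "\<dots> = (\<Sum>i<L. cnj (\<delta> i) * a i + cnj (\<delta> i) * y i)"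
      by (intro sum.cong refl) (simp add: F3 algebra_simps)
    finally show ?thesis by (simp add: sum.distrib)
  qed
  define Nd where "Nd = (\<Sum>i<L. (cmod (\<delta> i))\<^sup>2)"
  define Ny where "Ny = (\<Sum>i<L. (cmod (y i))\<^sup>2)"
  have cross: "(\<Sum>i<L. cmod (y i) * cmod (\<delta> i)) \<le> (c / 2) * Ny + Nd / (2 * c)" if c: "c > 0" for c
  proof -
    have "(\<Sum>i<L. cmod (y i) * cmod (\<delta> i)) \<le> (\<Sum>i<L. (c / 2) * (cmod (y i))\<^sup>2 + (cmod (\<delta> i))\<^sup>2 / (2 * c))"
      by (intro sum_mono young_cmod c)
    also have "\<dots> = (c / 2) * Ny + Nd / (2 * c)"
      unfolding Ny_def Nd_def by (simp add: sum.distrib sum_distrib_left sum_divide_distrib)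
    finally show ?thesis .
  qed
  have Qy: "b * Ny \<le> (\<Sum>i<L. cmod (y i) * cmod (\<delta> i))"
  proof -
    have "b * Ny \<le> Re (\<Sum>i<L. cnj (y i) * (\<Sum>j<L. R i j * y j))" unfolding Ny_def by (rule pos)
    also have "\<dots> = Re (\<Sum>i<L. cnj (y i) * \<delta> i)" by (simp add: F2)
    also have "\<dots> \<le> cmod (\<Sum>i<L. cnj (y i) * \<delta> i)" by (rule complex_Re_le_cmod)
    also have "\<dots> \<le> (\<Sum>i<L. cmod (cnj (y i) * \<delta> i))" by (rule norm_sum)
    also have "\<dots> = (\<Sum>i<L. cmod (y i) * cmod (\<delta> i))" by (simp add: norm_mult)
    finally show ?thesis .
  qed
  have Ny_le: "Ny \<le> Nd / b\<^sup>2"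
  proof -
    have "b * Ny \<le> (b / 2) * Ny + Nd / (2 * b)" using Qy cross[OF b0] by linarith
    then have "(b / 2) * Ny \<le> Nd / (2 * b)" by simp
    then show ?thesis using b0 by (simp add: field_simps power2_eq_square)
  qed
  have t2: "cmod (\<Sum>i<L. cnj (\<delta> i) * y i) \<le> Nd / b"
  proof -
    have "cmod (\<Sum>i<L. cnj (\<delta> i) * y i) \<le> (\<Sum>i<L. cmod (cnj (\<delta> i) * y i))" by (rule norm_sum)
    also have "\<dots> = (\<Sum>i<L. cmod (y i) * cmod (\<delta> i))" by (simp add: norm_mult mult.commute)
    also have "\<dots> \<le> (b / 2) * Ny + Nd / (2 * b)" by (rule cross[OF b0])
    also have "\<dots> \<le> (b / 2) * (Nd / b\<^sup>2) + Nd / (2 * b)"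
      using Ny_le b0 by (intro add_right_mono mult_left_mono) auto
    also have "\<dots> = Nd / b" using b0 by (simp add: field_simps power2_eq_square)
    finally show ?thesis .
  qed
  have t1: "cmod (\<Sum>i<L. cnj (\<delta> i) * a i) \<le> (\<Sum>i<L. cmod (\<delta> i) * cmod (a i))"
  proof -
    have "cmod (\<Sum>i<L. cnj (\<delta> i) * a i) \<le> (\<Sum>i<L. cmod (cnj (\<delta> i) * a i))" by (rule norm_sum)
    then show ?thesis by (simp add: norm_mult)
  qed
  have "s * cmod \<epsilon> = cmod (complex_of_real s * \<epsilon>)" using s0 by (simp add: norm_mult)
  also have "\<dots> \<le> (\<Sum>i<L. cmod (\<delta> i) * cmod (a i)) + Nd / b"
    unfolding F5 using t1 t2 norm_triangle_le by (meson add_mono norm_triangle_ineq order_trans)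
  finally have "s * cmod \<epsilon> \<le> (\<Sum>i<L. cmod (\<delta> i) * cmod (a i)) + Nd / b" .
  then have "cmod \<epsilon> \<le> ((\<Sum>i<L. cmod (\<delta> i) * cmod (a i)) + Nd / b) / s"
    using s0 by (simp add: field_simps)
  then show ?thesis unfolding \<epsilon>_def z_def Nd_def \<delta>_def .
qed

lemma covar_cnj:
  assumes Sc: "continuous_on {0..1} S"
  shows "cnj (covar S n) = covar S (- n)"
proof -
  have "cnj (covar S n) = integral {0..1} (\<lambda>\<nu>. cnj (complex_of_real (S \<nu>) * cis (2 * pi * \<nu> * real_of_int n)))"
    unfolding covar_def by (rule integral_cnj)
  also have "\<dots> = covar S (- n)" unfolding covar_def by (simp add: cis_cnj)
  finally show ?thesis .
qed

lemma quad_integral: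
  fixes w :: "real \<Rightarrow> real" and x :: "nat \<Rightarrow> complex"
  assumes wc: "continuous_on {0..1} w"
  shows "(\<Sum>i<L. cnj (x i) * (\<Sum>j<L. integral {0..1} (\<lambda>\<nu>. complex_of_real (w \<nu>) * cis (2 * pi * \<nu> * real_of_int (int i - int j))) * x j))
    = complex_of_real (integral {0..1} (\<lambda>\<nu>. w \<nu> * (cmod (\<Sum>i<L. cnj (x i) * cis (2 * pi * \<nu> * real i)))\<^sup>2))"
proof -
  define P where "P = (\<lambda>\<nu>. \<Sum>i<L. cnj (x i) * cis (2 * pi * \<nu> * real i))"
  define f where "f = (\<lambda>i j \<nu>. cnj (x i) * x j * (complex_of_real (w \<nu>) * cis (2 * pi * \<nu> * real_of_int (int i - int j))))"
  have fi: "f i j integrable_on {0..1}" for i j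
    unfolding f_def by (intro integrable_continuous_interval continuous_intros wc)
  have pw: "(\<Sum>i<L. \<Sum>j<L. f i j \<nu>) = complex_of_real (w \<nu> * (cmod (P \<nu>))\<^sup>2)" for \<nu>
  proof -
    have "complex_of_real ((cmod (P \<nu>))\<^sup>2) = P \<nu> * cnj (P \<nu>)" by (rule complex_norm_square)
    also have "\<dots> = (\<Sum>i<L. \<Sum>j<L. cnj (x i) * cis (2 * pi * \<nu> * real i) * (x j * cis (- (2 * pi * \<nu> * real j))))"
      unfolding P_def by (simp add: sum_product cis_cnj)
    also have "\<dots> = (\<Sum>i<L. \<Sum>j<L. cnj (x i) * x j * cis (2 * pi * \<nu> * real_of_int (int i - int j)))"
    proof (intro sum.cong refl)
      fix i j
      have "cis (2 * pi * \<nu> * real i) * cis (- (2 * pi * \<nu> * real j)) = cis (2 * pi * \<nu> * real_of_int (int i - int j))"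
        by (simp add: cis_mult algebra_simps)
      then show "cnj (x i) * cis (2 * pi * \<nu> * real i) * (x j * cis (- (2 * pi * \<nu> * real j))) =
                 cnj (x i) * x j * cis (2 * pi * \<nu> * real_of_int (int i - int j))"
        by (metis (no_types, lifting) mult.assoc mult.left_commute)
    qed
    finally have "complex_of_real ((cmod (P \<nu>))\<^sup>2) = (\<Sum>i<L. \<Sum>j<L. cnj (x i) * x j * cis (2 * pi * \<nu> * real_of_int (int i - int j)))" .
    then show ?thesis unfolding f_def
      by (simp add: sum_distrib_left algebra_simps)
  qed
  have "(\<Sum>i<L. cnj (x i) * (\<Sum>j<L. integral {0..1} (\<lambda>\<nu>. complex_of_real (w \<nu>) * cis (2 * pi * \<nu> * real_of_int (int i - int j))) * x j))
      = (\<Sum>i<L. \<Sum>j<L. integral {0..1} (f i j))"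
    unfolding f_def by (simp add: sum_distrib_left algebra_simps)
  also have "\<dots> = (\<Sum>i<L. integral {0..1} (\<lambda>\<nu>. \<Sum>j<L. f i j \<nu>))"
    by (intro sum.cong refl Henstock_Kurzweil_Integration.integral_sum[symmetric] fi) auto
  also have "\<dots> = integral {0..1} (\<lambda>\<nu>. \<Sum>i<L. \<Sum>j<L. f i j \<nu>)"
    by (intro Henstock_Kurzweil_Integration.integral_sum[symmetric] integrable_sum fi) auto
  also have "\<dots> = integral {0..1} (\<lambda>\<nu>. complex_of_real (w \<nu> * (cmod (P \<nu>))\<^sup>2))"
    unfolding pw ..
  also have "\<dots> = complex_of_real (integral {0..1} (\<lambda>\<nu>. w \<nu> * (cmod (P \<nu>))\<^sup>2))"
  proof -
    have "(\<lambda>\<nu>. w \<nu> * (cmod (P \<nu>))\<^sup>2) integrable_on {0..1}"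
      unfolding P_def by (intro integrable_continuous_interval continuous_intros wc)
    from integral_linear[OF this bounded_linear_of_real] show ?thesis by (simp add: o_def)
  qed
  finally show ?thesis unfolding P_def .
qed

lemma toeplitz_pos:
  fixes S :: "real \<Rightarrow> real" and x :: "nat \<Rightarrow> complex"
  assumes Sc: "continuous_on {0..1} S" and Sb: "\<And>\<nu>. \<nu> \<in> {0..1} \<Longrightarrow> b \<le> S \<nu>"
  shows "Re (\<Sum>i<L. cnj (x i) * (\<Sum>j<L. covar S (int i - int j) * x j)) \<ge> b * (\<Sum>i<L. (cmod (x i))\<^sup>2)"
proof -
  define P where "P = (\<lambda>\<nu>. \<Sum>i<L. cnj (x i) * cis (2 * pi * \<nu> * real i))"
  have ci: "integral {0..1} (\<lambda>\<nu>. complex_of_real 1 * cis (2 * pi * \<nu> * real_of_int (int i - int j))) = (if i = j then 1 else 0)" for i j :: nat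
    using integral_unique[OF cis_int_has_integral[of "int i - int j"]] by simp
  have one: "(\<Sum>i<L. (cmod (x i))\<^sup>2) = integral {0..1} (\<lambda>\<nu>. 1 * (cmod (P \<nu>))\<^sup>2)"
  proof -
    have "complex_of_real (integral {0..1} (\<lambda>\<nu>. 1 * (cmod (P \<nu>))\<^sup>2)) =
      (\<Sum>i<L. cnj (x i) * (\<Sum>j<L. integral {0..1} (\<lambda>\<nu>. complex_of_real 1 * cis (2 * pi * \<nu> * real_of_int (int i - int j))) * x j))"
      unfolding P_def by (rule quad_integral[symmetric]) simp
    also have "\<dots> = (\<Sum>i<L. cnj (x i) * (\<Sum>j<L. (if i = j then 1 else 0) * x j))"
      by (simp only: ci)
    also have "\<dots> = (\<Sum>i<L. cnj (x i) * x i)"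
    proof (intro sum.cong refl)
      fix i assume i: "i \<in> {..<L}"
      have "(\<Sum>j<L. (if i = j then 1 else 0) * x j) = (\<Sum>j<L. if i = j then x j else 0)" by (rule sum.cong) auto
      also have "\<dots> = x i" using i by simp
      finally show "cnj (x i) * (\<Sum>j<L. (if i = j then 1 else 0) * x j) = cnj (x i) * x i" by simp
    qed
    also have "\<dots> = (\<Sum>i<L. complex_of_real ((cmod (x i))\<^sup>2))"
      by (intro sum.cong refl) (metis complex_norm_square mult.commute of_real_power)
    also have "\<dots> = complex_of_real (\<Sum>i<L. (cmod (x i))\<^sup>2)" by simp
    finally have "complex_of_real (integral {0..1} (\<lambda>\<nu>. 1 * (cmod (P \<nu>))\<^sup>2)) = complex_of_real (\<Sum>i<L. (cmod (x i))\<^sup>2)" .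
    then show ?thesis by (simp only: of_real_eq_iff)
  qed
  have Pc: "continuous_on {0..1} P" unfolding P_def by (intro continuous_intros)
  have "Re (\<Sum>i<L. cnj (x i) * (\<Sum>j<L. covar S (int i - int j) * x j)) = integral {0..1} (\<lambda>\<nu>. S \<nu> * (cmod (P \<nu>))\<^sup>2)"
    unfolding covar_def P_def quad_integral[OF Sc] by simp
  also have "\<dots> \<ge> integral {0..1} (\<lambda>\<nu>. b * (cmod (P \<nu>))\<^sup>2)"
    by (intro integral_le integrable_continuous_interval continuous_intros Sc Pc mult_right_mono Sb) auto
  finally show ?thesis using one by simp
qed


lemma delta_bound:
  fixes S :: "real \<Rightarrow> real" and L i :: nat
  assumes hs: "((\<lambda>n. covar S n * cis (- (2 * pi * \<nu> * real_of_int n))) has_sum complex_of_real (S \<nu>)) UNIV"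
    and nsum: "\<And>B. (\<lambda>n. cmod (covar S n)) summable_on B"
    and i: "i < L"
  shows "cmod (complex_of_real (S \<nu>) * (cis (2 * pi * \<nu> * real i) / complex_of_real (sqrt (real L)))
            - (\<Sum>j<L. covar S (int i - int j) * (cis (2 * pi * \<nu> * real j) / complex_of_real (sqrt (real L)))))
         \<le> (\<Sum>\<^sub>\<infinity>n\<in>- {int i - int L + 1..int i}. cmod (covar S n)) / sqrt (real L)"
proof -
  define r where "r = covar S"
  define e where "e = (\<lambda>n. r n * cis (- (2 * pi * \<nu> * real_of_int n)))"
  define A where "A = {int i - int L + 1..int i}"
  define c where "c = cis (2 * pi * \<nu> * real i) / complex_of_real (sqrt (real L))"
  have ne: "norm (e n) = cmod (r n)" for n unfolding e_def by (simp add: norm_mult)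
  have esum: "e summable_on B" for B
  proof -
    have "(\<lambda>n. norm (e n)) summable_on B" using nsum[of B] by (simp add: ne r_def)
    then show ?thesis by (rule abs_summable_summable)
  qed
  have Sv: "complex_of_real (S \<nu>) = (\<Sum>n\<in>A. e n) + (\<Sum>\<^sub>\<infinity>n\<in>- A. e n)"
  proof -
    have "complex_of_real (S \<nu>) = (\<Sum>\<^sub>\<infinity>n. e n)" using hs unfolding e_def r_def by (simp add: infsumI)
    also have "\<dots> = (\<Sum>\<^sub>\<infinity>n\<in>A \<union> - A. e n)" by simp
    also have "\<dots> = (\<Sum>\<^sub>\<infinity>n\<in>A. e n) + (\<Sum>\<^sub>\<infinity>n\<in>- A. e n)"
      by (rule infsum_Un_disjoint) (auto intro: esum)
    finally show ?thesis unfolding A_def by simp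
  qed
  have Rs: "(\<Sum>j<L. r (int i - int j) * (cis (2 * pi * \<nu> * real j) / complex_of_real (sqrt (real L))))
        = c * (\<Sum>n\<in>A. e n)"
  proof -
    have "(\<Sum>n\<in>A. e n) = (\<Sum>j<L. e (int i - int j))"
      unfolding A_def
      by (rule sum.reindex_bij_witness[of _ "\<lambda>j. int i - int j" "\<lambda>n. nat (int i - n)"]) auto
    then have "c * (\<Sum>n\<in>A. e n) = (\<Sum>j<L. c * e (int i - int j))" by (simp add: sum_distrib_left)
    also have "\<dots> = (\<Sum>j<L. r (int i - int j) * (cis (2 * pi * \<nu> * real j) / complex_of_real (sqrt (real L))))"
    proof (intro sum.cong refl)
      fix j
      have "cis (2 * pi * \<nu> * real i) * cis (- (2 * pi * \<nu> * real_of_int (int i - int j))) = cis (2 * pi * \<nu> * real j)"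
        by (simp add: cis_mult algebra_simps)
      then show "c * e (int i - int j) = r (int i - int j) * (cis (2 * pi * \<nu> * real j) / complex_of_real (sqrt (real L)))"
        unfolding c_def e_def by (simp add: field_simps)
    qed
    finally show ?thesis by simp
  qed
  have "complex_of_real (S \<nu>) * c - (\<Sum>j<L. r (int i - int j) * (cis (2 * pi * \<nu> * real j) / complex_of_real (sqrt (real L))))
      = c * (\<Sum>\<^sub>\<infinity>n\<in>- A. e n)"
    unfolding Rs Sv by (simp add: algebra_simps)
  also have "cmod \<dots> = cmod c * cmod (\<Sum>\<^sub>\<infinity>n\<in>- A. e n)" by (simp add: norm_mult)
  also have "\<dots> \<le> cmod c * (\<Sum>\<^sub>\<infinity>n\<in>- A. cmod (r n))"
  proof (rule mult_left_mono)
    have "cmod (\<Sum>\<^sub>\<infinity>n\<in>- A. e n) \<le> (\<Sum>\<^sub>\<infinity>n\<in>- A. norm (e n))"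
      by (rule norm_infsum_bound) (use nsum in \<open>simp add: ne r_def\<close>)
    then show "cmod (\<Sum>\<^sub>\<infinity>n\<in>- A. e n) \<le> (\<Sum>\<^sub>\<infinity>n\<in>- A. cmod (r n))" by (simp add: ne)
  qed simp
  also have "cmod c = 1 / sqrt (real L)" unfolding c_def by (simp add: norm_divide)
  finally show ?thesis unfolding r_def c_def A_def by simp
qed

lemma infsum_finite_sum:
  fixes f :: "'i \<Rightarrow> 'a \<Rightarrow> real"
  assumes "finite I" and "\<And>i. i \<in> I \<Longrightarrow> f i summable_on A"
  shows "(\<Sum>\<^sub>\<infinity>x\<in>A. \<Sum>i\<in>I. f i x) = (\<Sum>i\<in>I. \<Sum>\<^sub>\<infinity>x\<in>A. f i x)"
    "(\<lambda>x. \<Sum>i\<in>I. f i x) summable_on A"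
  using assms
proof (induction I rule: finite_induct)
  case empty
  { case 1 then show ?case by simp }
  { case 2 then show ?case by simp }
next
  case (insert j I)
  { case 1
    then show ?case using insert
      by (simp add: infsum_add) }
  { case 2
    then show ?case using insert
      by (simp add: summable_on_add) }
qed

lemma count_bound:
  fixes n :: int and L :: nat
  shows "(\<Sum>i<L. if n \<in> - {int i - int L + 1..int i} then 1 else 0) \<le> min \<bar>real_of_int n\<bar> (real L)"
proof -
  have eq: "(\<Sum>i<L. if n \<in> - {int i - int L + 1..int i} then 1 else (0::real)) = real (card {i. i < L \<and> n \<in> - {int i - int L + 1..int i}})"
    by (simp add: sum.If_cases lessThan_def Int_def)
  have c1: "card {i. i < L \<and> n \<in> - {int i - int L + 1..int i}} \<le> L"
    by (rule order_trans[OF card_mono[of "{..<L}"]]) auto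
  have c2: "real (card {i. i < L \<and> n \<in> - {int i - int L + 1..int i}}) \<le> \<bar>real_of_int n\<bar>"
  proof (cases "n \<ge> 0")
    case True
    have "{i. i < L \<and> n \<in> - {int i - int L + 1..int i}} \<subseteq> {..<nat n}" using True by auto
    then have "card {i. i < L \<and> n \<in> - {int i - int L + 1..int i}} \<le> nat n"
      using card_mono[of "{..<nat n}"] by fastforce
    then show ?thesis using True by linarith
  next
    case False
    have "{i. i < L \<and> n \<in> - {int i - int L + 1..int i}} \<subseteq> {nat (int L + n)..<L}" using False by auto
    then have "card {i. i < L \<and> n \<in> - {int i - int L + 1..int i}} \<le> L - nat (int L + n)"
      using card_mono[of "{nat (int L + n)..<L}"] by fastforce
    then show ?thesis using False by linarith
  qed
  show ?thesis unfolding eq using c1 c2 by simp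
qed

lemma min_powr_bound:
  fixes u g \<gamma>0 :: real and L :: nat
  assumes u: "u \<ge> 0" and L: "L \<ge> 1" and g: "0 \<le> g" "g \<le> 1" "g \<le> \<gamma>0"
  shows "min u (real L) \<le> real L powr (1 - g) * (1 + u) powr \<gamma>0"
proof -
  define m where "m = min (1 + u) (real L)"
  have m0: "m > 0" using u L unfolding m_def by auto
  have "min u (real L) \<le> m" unfolding m_def by auto
  also have "m = m powr (1 - g) * m powr g" using m0 by (simp add: powr_add[symmetric])
  also have "\<dots> \<le> real L powr (1 - g) * (1 + u) powr g"
    using m0 g by (intro mult_mono powr_mono2) (auto simp: m_def)
  also have "(1 + u) powr g \<le> (1 + u) powr \<gamma>0" using u g by (intro powr_mono) auto
  then have "real L powr (1 - g) * (1 + u) powr g \<le> real L powr (1 - g) * (1 + u) powr \<gamma>0"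
    by (intro mult_left_mono) auto
  finally show ?thesis .
qed

lemma tau_sum:
  fixes r :: "int \<Rightarrow> complex" and \<gamma>0 C g :: real and L :: nat
  assumes Ws: "(\<lambda>n. (1 + \<bar>real_of_int n\<bar>) powr \<gamma>0 * cmod (r n)) summable_on UNIV"
    and WC: "(\<Sum>\<^sub>\<infinity>n. (1 + \<bar>real_of_int n\<bar>) powr \<gamma>0 * cmod (r n)) \<le> C"
    and L: "L \<ge> 1" and g: "0 \<le> g" "g \<le> 1" "g \<le> \<gamma>0"
  shows "(\<Sum>i<L. \<Sum>\<^sub>\<infinity>n\<in>- {int i - int L + 1..int i}. cmod (r n)) \<le> real L powr (1 - g) * C"
proof -
  have g0: "\<gamma>0 \<ge> 0" using g by simp
  note tb = tail_bound[OF Ws WC g0 order.refl]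
  define B where "B = (\<lambda>i::nat. - {int i - int L + 1..int i})"
  define f where "f = (\<lambda>i n. if n \<in> B i then cmod (r n) else 0)"
  have fs: "f i summable_on UNIV" for i
  proof -
    have "(\<lambda>n. cmod (r n)) summable_on B i" using tb(1) by simp
    then show ?thesis unfolding f_def
      by (subst summable_on_cong_neutral[where T = "B i"]) auto
  qed
  have "(\<Sum>i<L. \<Sum>\<^sub>\<infinity>n\<in>B i. cmod (r n)) = (\<Sum>i<L. \<Sum>\<^sub>\<infinity>n. f i n)"
    unfolding f_def by (intro sum.cong refl infsum_cong_neutral) auto
  also have "\<dots> = (\<Sum>\<^sub>\<infinity>n. \<Sum>i<L. f i n)"
    by (rule infsum_finite_sum(1)[symmetric]) (auto intro: fs)
  also have "\<dots> \<le> (\<Sum>\<^sub>\<infinity>n. real L powr (1 - g) * ((1 + \<bar>real_of_int n\<bar>) powr \<gamma>0 * cmod (r n)))"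
  proof (rule infsum_mono)
    show "(\<lambda>n. \<Sum>i<L. f i n) summable_on UNIV" by (rule infsum_finite_sum(2)) (auto intro: fs)
    show "(\<lambda>n. real L powr (1 - g) * ((1 + \<bar>real_of_int n\<bar>) powr \<gamma>0 * cmod (r n))) summable_on UNIV"
      by (rule summable_on_cmult_right[OF Ws])
    fix n :: int
    have "(\<Sum>i<L. f i n) = (\<Sum>i<L. if n \<in> B i then 1 else 0) * cmod (r n)"
      unfolding f_def sum_distrib_right by (intro sum.cong refl) simp
    also have "\<dots> \<le> min \<bar>real_of_int n\<bar> (real L) * cmod (r n)"
      unfolding B_def by (intro mult_right_mono count_bound) auto
    also have "\<dots> \<le> (real L powr (1 - g) * (1 + \<bar>real_of_int n\<bar>) powr \<gamma>0) * cmod (r n)"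
      by (intro mult_right_mono min_powr_bound L g) auto
    finally show "(\<Sum>i<L. f i n) \<le> real L powr (1 - g) * ((1 + \<bar>real_of_int n\<bar>) powr \<gamma>0 * cmod (r n))"
      by (simp add: mult.assoc)
  qed
  also have "\<dots> = real L powr (1 - g) * (\<Sum>\<^sub>\<infinity>n. (1 + \<bar>real_of_int n\<bar>) powr \<gamma>0 * cmod (r n))"
    by (rule infsum_cmult_right) (use Ws in auto)
  also have "\<dots> \<le> real L powr (1 - g) * C" using WC by (intro mult_left_mono) auto
  finally show ?thesis unfolding B_def .
qed


lemma core_bound:
  fixes S :: "real \<Rightarrow> real" and L :: nat and \<nu> b \<gamma>0 C g :: real
  assumes Sc: "continuous_on {0..1} S" and Sb: "\<And>\<nu>. \<nu> \<in> {0..1} \<Longrightarrow> b \<le> S \<nu>" and b0: "b > 0"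
    and Ws: "(\<lambda>n. (1 + \<bar>real_of_int n\<bar>) powr \<gamma>0 * cmod (covar S n)) summable_on UNIV"
    and WC: "(\<Sum>\<^sub>\<infinity>n. (1 + \<bar>real_of_int n\<bar>) powr \<gamma>0 * cmod (covar S n)) \<le> C"
    and g0: "\<gamma>0 > 0" and L: "L \<ge> 1" and \<nu>: "\<nu> \<in> {0..1}"
    and g: "0 \<le> g" "g \<le> 1" "g \<le> \<gamma>0"
  shows "cmod (eps S L \<nu>) \<le> ((C + C * C / b) / b) / real L powr g"
proof -
  define R where "R = toeplitz_cov S L"
  define Rf where "Rf = (\<lambda>i j. covar S (int i - int j))"
  have Rc: "R \<in> carrier_mat L L" unfolding R_def toeplitz_cov_def by simp
  have Rij: "R $$ (i, j) = Rf i j" if "i < L" "j < L" for i j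
    using that unfolding R_def toeplitz_cov_def Rf_def by simp
  have pos: "Re (\<Sum>i<L. cnj (x i) * (\<Sum>j<L. Rf i j * x j)) \<ge> b * (\<Sum>i<L. (cmod (x i))\<^sup>2)" for x
    unfolding Rf_def by (rule toeplitz_pos[OF Sc Sb])
  have Rv: "(R *\<^sub>v v) $ i = (\<Sum>j<L. Rf i j * v $ j)" if "i < L" "v \<in> carrier_vec L" for i v
    using that Rc by (auto simp: scalar_prod_def Rij lessThan_atLeast0 intro!: sum.cong)
  have detR: "Determinant.det R \<noteq> 0"
  proof
    assume "Determinant.det R = 0"
    then obtain v where v: "v \<in> carrier_vec L" "v \<noteq> 0\<^sub>v L" "R *\<^sub>v v = 0\<^sub>v L"
      using det_0_iff_vec_prod_zero_field[OF Rc] by blast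
    have "(\<Sum>j<L. Rf i j * v $ j) = 0" if "i < L" for i
      using Rv[OF that v(1)] v(3) that by simp
    then have "b * (\<Sum>i<L. (cmod (v $ i))\<^sup>2) \<le> 0"
      using pos[of "\<lambda>i. v $ i"] by simp
    then have "(\<Sum>i<L. (cmod (v $ i))\<^sup>2) \<le> 0" using b0 by (simp add: mult_le_0_iff)
    then have "(\<Sum>i<L. (cmod (v $ i))\<^sup>2) = 0" by (intro order.antisym sum_nonneg) auto
    then have "\<forall>i\<in>{..<L}. (cmod (v $ i))\<^sup>2 = 0"
      by (subst sum_nonneg_eq_0_iff[symmetric]) auto
    then have "v = 0\<^sub>v L" using v(1) by (intro eq_vecI) auto
    then show False using v(2) by simp
  qed
  obtain Ri where Ri: "mat_inverse R = Some Ri"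
  proof (cases "mat_inverse R")
    case None
    then have "R \<notin> Units (ring_mat TYPE(complex) L ())" by (rule mat_inverse(1)[OF Rc])
    moreover have "R \<in> Units (ring_mat TYPE(complex) L ())" by (rule det_non_zero_imp_unit[OF Rc detR])
    ultimately show ?thesis by simp
  next
    case (Some B) then show ?thesis using that by simp
  qed
  have RiP: "R * Ri = 1\<^sub>m L" "Ri * R = 1\<^sub>m L" "Ri \<in> carrier_mat L L"
    using mat_inverse(2)[OF Rc Ri] by auto
  define G where "G = (\<lambda>i j. Ri $$ (i, j))"
  have RG: "(\<Sum>k<L. Rf i k * G k j) = (if i = j then 1 else 0)" if "i < L" "j < L" for i j
  proof -
    have "(R * Ri) $$ (i, j) = (\<Sum>k<L. Rf i k * G k j)"
      using that Rc RiP(3) by (auto simp: scalar_prod_def Rij G_def lessThan_atLeast0 intro!: sum.cong)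
    then show ?thesis using RiP(1) that by simp
  qed
  have GR: "(\<Sum>k<L. G i k * Rf k j) = (if i = j then 1 else 0)" if "i < L" "j < L" for i j
  proof -
    have "(Ri * R) $$ (i, j) = (\<Sum>k<L. G i k * Rf k j)"
      using that Rc RiP(3) by (auto simp: scalar_prod_def Rij G_def lessThan_atLeast0 intro!: sum.cong)
    then show ?thesis using RiP(2) that by simp
  qed
  have herm: "cnj (Rf i j) = Rf j i" for i j
    unfolding Rf_def covar_cnj[OF Sc] by simp
  define a where "a = (\<lambda>k. cis (2 * pi * \<nu> * real k) / complex_of_real (sqrt (real L)))"
  have La: "real L > 0" using L by simp
  have acm: "cmod (a k) = 1 / sqrt (real L)" for k unfolding a_def by (simp add: norm_divide)
  have an: "(\<Sum>i<L. (cmod (a i))\<^sup>2) = 1" unfolding acm using La by (simp add: power_divide)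
  have epsf: "eps S L \<nu> = complex_of_real (S \<nu>) * (\<Sum>i<L. cnj (a i) * (\<Sum>j<L. G i j * a j)) - 1"
  proof -
    have "scalar_prod (conjugate (steer L \<nu>)) (mult_mat_vec Ri (steer L \<nu>)) = (\<Sum>i<L. cnj (a i) * (\<Sum>j<L. G i j * a j))"
      using RiP(3) by (auto simp: scalar_prod_def steer_def a_def G_def lessThan_atLeast0 intro!: sum.cong)
    then show ?thesis unfolding eps_def R_def[symmetric] Ri by simp
  qed
  have Sv: "S \<nu> \<ge> b" using Sb[OF \<nu>] .
  define \<delta> where "\<delta> = (\<lambda>i. complex_of_real (S \<nu>) * a i - (\<Sum>j<L. Rf i j * a j))"
  have AB: "cmod (eps S L \<nu>) \<le> ((\<Sum>i<L. cmod (\<delta> i) * cmod (a i)) + (\<Sum>i<L. (cmod (\<delta> i))\<^sup>2) / b) / S \<nu>"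
    unfolding epsf \<delta>_def by (rule abstract_bound[OF RG GR herm pos b0 Sv an])
  note tb = tail_bound[OF Ws WC less_imp_le[OF g0]]
  have nsum: "(\<lambda>n. cmod (covar S n)) summable_on B" for B using tb(1)[of 0 B] by simp
  have hs: "((\<lambda>n. covar S n * cis (- (2 * pi * \<nu> * real_of_int n))) has_sum complex_of_real (S \<nu>)) UNIV"
    by (rule fourier_inversion[OF Sc Ws WC g0 \<nu>])
  define \<tau> where "\<tau> = (\<lambda>i::nat. \<Sum>\<^sub>\<infinity>n\<in>- {int i - int L + 1..int i}. cmod (covar S n))"
  have \<tau>0: "\<tau> i \<ge> 0" for i unfolding \<tau>_def by (rule infsum_nonneg) simp
  have \<tau>C: "\<tau> i \<le> C" for i using tb(2)[of 0] unfolding \<tau>_def by simp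
  have C0: "C \<ge> 0" using \<tau>0[of 0] \<tau>C[of 0] by linarith
  have db: "cmod (\<delta> i) \<le> \<tau> i / sqrt (real L)" if "i < L" for i
    using delta_bound[OF hs nsum that] unfolding \<delta>_def \<tau>_def Rf_def a_def by simp
  have Tsum: "(\<Sum>i<L. \<tau> i) \<le> real L powr (1 - g) * C"
    unfolding \<tau>_def by (rule tau_sum[OF Ws WC L g])
  have s1: "(\<Sum>i<L. cmod (\<delta> i) * cmod (a i)) \<le> (\<Sum>i<L. \<tau> i) / real L"
  proof -
    have "cmod (\<delta> i) * cmod (a i) \<le> \<tau> i / real L" if i: "i < L" for i
    proof -
      have "cmod (\<delta> i) * cmod (a i) \<le> (\<tau> i / sqrt (real L)) * (1 / sqrt (real L))"
        unfolding acm using db[OF i] by (intro mult_right_mono) auto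
      also have "\<dots> = \<tau> i / real L" using La by (simp add: real_sqrt_mult[symmetric])
      finally show ?thesis .
    qed
    then have "(\<Sum>i<L. cmod (\<delta> i) * cmod (a i)) \<le> (\<Sum>i<L. \<tau> i / real L)"
      by (intro sum_mono) auto
    also have "\<dots> = (\<Sum>i<L. \<tau> i) / real L"
      by (simp add: sum_divide_distrib[symmetric])
    finally show ?thesis .
  qed
  have s2: "(\<Sum>i<L. (cmod (\<delta> i))\<^sup>2) \<le> C * (\<Sum>i<L. \<tau> i) / real L"
  proof -
    have "(\<Sum>i<L. (cmod (\<delta> i))\<^sup>2) \<le> (\<Sum>i<L. (\<tau> i / sqrt (real L))\<^sup>2)"
      using db by (intro sum_mono power_mono) auto
    also have "\<dots> = (\<Sum>i<L. \<tau> i * \<tau> i) / real L"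
      using La by (simp add: sum_divide_distrib[symmetric] power_divide power2_eq_square)
    also have "\<dots> \<le> (\<Sum>i<L. C * \<tau> i) / real L"
      using \<tau>0 \<tau>C La by (intro divide_right_mono sum_mono mult_right_mono) auto
    finally show ?thesis by (simp add: sum_distrib_left)
  qed
  define T where "T = (\<Sum>i<L. \<tau> i)"
  have T0: "T \<ge> 0" unfolding T_def using \<tau>0 by (simp add: sum_nonneg)
  have TL: "T / real L \<le> C / real L powr g"
  proof -
    have "T / real L \<le> real L powr (1 - g) * C / real L"
      using Tsum La unfolding T_def by (simp add: divide_right_mono)
    also have "\<dots> = C / real L powr g"
      using La by (simp add: powr_diff field_simps)
    finally show ?thesis .
  qed
  have "cmod (eps S L \<nu>) \<le> (T / real L + C * T / real L / b) / S \<nu>"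
    using AB s1 s2 b0 Sv unfolding T_def
    by (smt (verit, ccfv_SIG) divide_right_mono frac_le)
  also have "\<dots> \<le> (T / real L + C * T / real L / b) / b"
    using Sv b0 T0 C0 La by (intro divide_left_mono) (auto intro!: add_nonneg_nonneg divide_nonneg_nonneg mult_nonneg_nonneg)
  also have "\<dots> = (T / real L) * (1 + C / b) / b" using b0 La by (simp add: field_simps)
  also have "\<dots> \<le> (C / real L powr g) * (1 + C / b) / b"
    using TL b0 C0 by (intro divide_right_mono mult_right_mono) auto
  also have "\<dots> = ((C + C * C / b) / b) / real L powr g" using b0 by (simp add: field_simps)
  finally show ?thesis .
qed



theorem lemma5p3:
  fixes S :: "nat \<Rightarrow> real \<Rightarrow> real" and \<gamma>\<^sub>0 :: real
  assumes cont: "\<And>m. m \<ge> 1 \<Longrightarrow> continuous_on {0..1} (S m)"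
    and A3_upper: "\<exists>B. \<forall>m\<ge>1. \<forall>\<nu>\<in>{0..1}. S m \<nu> \<le> B"
    and A3_lower: "\<exists>b>0. \<forall>m\<ge>1. \<forall>\<nu>\<in>{0..1}. b \<le> S m \<nu>"
    and \<gamma>0_pos: "\<gamma>\<^sub>0 > 0"
    and A5: "\<exists>C. \<forall>m\<ge>1.
        (\<lambda>n::int. (1 + \<bar>real_of_int n\<bar>) powr \<gamma>\<^sub>0 * cmod (covar (S m) n)) summable_on UNIV \<and>
        (\<Sum>\<^sub>\<infinity>n::int. (1 + \<bar>real_of_int n\<bar>) powr \<gamma>\<^sub>0 * cmod (covar (S m) n)) \<le> C"
  shows "(\<forall>\<gamma>. \<gamma> < \<gamma>\<^sub>0 \<and> \<gamma> \<noteq> 1 \<longrightarrow>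
            (\<exists>\<kappa>. \<forall>L\<ge>1. \<forall>m\<ge>1. \<forall>\<nu>\<in>{0..1}.
               cmod (eps (S m) L \<nu>) \<le> \<kappa> / real L powr (min \<gamma> 1)))
       \<and> (1 < \<gamma>\<^sub>0 \<longrightarrow>
            (\<exists>\<kappa>. \<forall>L\<ge>2. \<forall>m\<ge>1. \<forall>\<nu>\<in>{0..1}.
               cmod (eps (S m) L \<nu>) \<le> \<kappa> * ln (real L) / real L))"
proof -
  obtain b where b0: "b > 0" and Sb: "\<And>m \<nu>. m \<ge> 1 \<Longrightarrow> \<nu> \<in> {0..1} \<Longrightarrow> b \<le> S m \<nu>"
    using A3_lower by blast
  obtain C where CW: "\<And>m. m \<ge> 1 \<Longrightarrow> (\<lambda>n::int. (1 + \<bar>real_of_int n\<bar>) powr \<gamma>\<^sub>0 * cmod (covar (S m) n)) summable_on UNIV"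
    and CC: "\<And>m. m \<ge> 1 \<Longrightarrow> (\<Sum>\<^sub>\<infinity>n::int. (1 + \<bar>real_of_int n\<bar>) powr \<gamma>\<^sub>0 * cmod (covar (S m) n)) \<le> C"
    using A5 by blast
  have C0: "C \<ge> 0"
  proof -
    have "0 \<le> (\<Sum>\<^sub>\<infinity>n::int. (1 + \<bar>real_of_int n\<bar>) powr \<gamma>\<^sub>0 * cmod (covar (S 1) n))"
      by (rule infsum_nonneg) simp
    then show ?thesis using CC[of 1] by simp
  qed
  define K where "K = (C + C * C / b) / b"
  have K0: "K \<ge> 0" unfolding K_def using C0 b0 by simp
  have core: "cmod (eps (S m) L \<nu>) \<le> K / real L powr g"
    if "m \<ge> 1" "L \<ge> 1" "\<nu> \<in> {0..1}" "0 \<le> g" "g \<le> 1" "g \<le> \<gamma>\<^sub>0" for m L \<nu> g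
    unfolding K_def
    by (rule core_bound[OF cont[OF that(1)] Sb[OF that(1)] b0 CW[OF that(1)] CC[OF that(1)] \<gamma>0_pos that(2-6)])
  have P1: "\<exists>\<kappa>. \<forall>L\<ge>1. \<forall>m\<ge>1. \<forall>\<nu>\<in>{0..1}. cmod (eps (S m) L \<nu>) \<le> \<kappa> / real L powr (min \<gamma> 1)"
    if \<gamma>: "\<gamma> < \<gamma>\<^sub>0" for \<gamma>
  proof (intro exI allI impI ballI)
    fix L m \<nu> assume L: "(L::nat) \<ge> 1" and m: "(m::nat) \<ge> 1" and \<nu>: "\<nu> \<in> {0..1::real}"
    define g where "g = max 0 (min \<gamma> 1)"
    have g: "0 \<le> g" "g \<le> 1" "g \<le> \<gamma>\<^sub>0" unfolding g_def using \<gamma> \<gamma>0_pos by auto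
    have "cmod (eps (S m) L \<nu>) \<le> K / real L powr g" by (rule core[OF m L \<nu> g])
    also have "\<dots> \<le> K / real L powr (min \<gamma> 1)"
      using L K0 by (intro divide_left_mono powr_mono) (auto simp: g_def)
    finally show "cmod (eps (S m) L \<nu>) \<le> K / real L powr (min \<gamma> 1)" .
  qed
  have P2: "\<exists>\<kappa>. \<forall>L\<ge>2. \<forall>m\<ge>1. \<forall>\<nu>\<in>{0..1}. cmod (eps (S m) L \<nu>) \<le> \<kappa> * ln (real L) / real L"
    if \<gamma>: "1 < \<gamma>\<^sub>0"
  proof (intro exI allI impI ballI)
    fix L m \<nu> assume L: "(L::nat) \<ge> 2" and m: "(m::nat) \<ge> 1" and \<nu>: "\<nu> \<in> {0..1::real}"
    have "cmod (eps (S m) L \<nu>) \<le> K / real L powr 1" by (rule core[OF m _ \<nu>]) (use L \<gamma> in auto)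
    also have "\<dots> = K / real L" using L by simp
    also have "\<dots> \<le> (K / ln 2) * ln (real L) / real L"
    proof -
      have l2: "ln 2 > (0::real)" by simp
      have "ln 2 \<le> ln (real L)" using L by simp
      then have "K * 1 \<le> K * (ln (real L) / ln 2)" using K0 l2 by (intro mult_left_mono) (auto simp: field_simps)
      then show ?thesis using L l2 by (simp add: field_simps)
    qed
    finally show "cmod (eps (S m) L \<nu>) \<le> (K / ln 2) * ln (real L) / real L" .
  qed
  show ?thesis using P1 P2 by blast
qed

end
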